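(* Let $C$ be a closed cone with nonempty interior $\operatorname{int} C$ in a real Banach space $X$, and let $f:\operatorname{int} C \to \operatorname{int} C$ be subhomogeneous and type K order-preserving. Suppose that $f$ has a fixed point in $\operatorname{int} C$ and that, for some $x \in \operatorname{int} C$, the norm closure of the orbit $\mathcal{O}(x,f) = \{f^k(x) : k \in \mathbb{N}\}$ is compact. Then the sequence $f^k(x)$ converges (in norm) to a fixed point of $f$.
   Context: A closed cone is a closed convex set $C \subset X$ with $\lambda C \subset C$ for all $\lambda \ge 0$ and $C \cap (-C) = \{0\}$. It induces the partial order $x \le y$ iff $y - x \in C$. A map $f$ on a domain $D\subseteq X$ is order-preserving if $x \le y$ implies $f(x) \le f(y)$; it is subhomogeneous if $f(tx) \le t f(x)$ for all $t \ge 1$ and $x \in D$. A map $f: D \to X$ is type K order-preserving if for any $x, y \in D$ with $x \le y$ there exists $\epsilon > 0$ such that $f(y) - f(x) \ge \epsilon (y - x)$. *)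

theory Defs
  imports "HOL-Analysis.Analysis"
begin

definition closed_cone :: "'a::real_normed_vector set \<Rightarrow> bool" where
  "closed_cone C \<longleftrightarrow> closed C \<and> convex C \<and> (\<forall>c::real. \<forall>x\<in>C. c \<ge> 0 \<longrightarrow> c *\<^sub>R x \<in> C)
     \<and> C \<inter> uminus ` C = {0}"

definition cone_le :: "'a::real_normed_vector set \<Rightarrow> 'a \<Rightarrow> 'a \<Rightarrow> bool" where
  "cone_le C x y \<longleftrightarrow> y - x \<in> C"

definition subhomogeneous_on :: "'a::real_normed_vector set \<Rightarrow> 'a set \<Rightarrow> ('a \<Rightarrow> 'a) \<Rightarrow> bool" where
  "subhomogeneous_on C D f \<longleftrightarrow>
     (\<forall>t::real. \<forall>x\<in>D. t \<ge> 1 \<longrightarrow> cone_le C (f (t *\<^sub>R x)) (t *\<^sub>R f x))"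

definition typeK_order_preserving_on :: "'a::real_normed_vector set \<Rightarrow> 'a set \<Rightarrow> ('a \<Rightarrow> 'a) \<Rightarrow> bool" where
  "typeK_order_preserving_on C D f \<longleftrightarrow>
     (\<forall>x\<in>D. \<forall>y\<in>D. cone_le C x y \<longrightarrow>
        (\<exists>\<epsilon>::real. \<epsilon> > 0 \<and> cone_le C (\<epsilon> *\<^sub>R (y - x)) (f y - f x)))"

end

theory Submission
  imports Defs
begin


lemma cone_0: "closed_cone C \<Longrightarrow> 0 \<in> C"
  unfolding closed_cone_def by blast

lemma cone_scale: "closed_cone C \<Longrightarrow> c \<ge> 0 \<Longrightarrow> a \<in> C \<Longrightarrow> c *\<^sub>R a \<in> C"
  unfolding closed_cone_def by blast

lemma cone_closed: "closed_cone C \<Longrightarrow> closed C"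
  unfolding closed_cone_def by blast

lemma cone_add: assumes "closed_cone C" "a \<in> C" "b \<in> C" shows "a + b \<in> C"
proof -
  have cv: "convex C" using assms(1) unfolding closed_cone_def by blast
  have "(1/2::real) *\<^sub>R a + (1/2::real) *\<^sub>R b \<in> C"
    using cv assms(2,3) unfolding convex_def by auto
  hence "(2::real) *\<^sub>R ((1/2::real) *\<^sub>R a + (1/2::real) *\<^sub>R b) \<in> C"
    using cone_scale[OF assms(1)] by auto
  thus ?thesis by (simp add: scaleR_add_right)
qed

lemma cone_antisym: assumes "closed_cone C" "a \<in> C" "- a \<in> C" shows "a = 0"
proof -
  have "a \<in> C \<inter> uminus ` C" using assms(2,3) by (metis IntI image_eqI minus_minus)
  thus ?thesis using assms(1) unfolding closed_cone_def by blast
qed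

lemma cone_sum: assumes "closed_cone C" "\<And>k. k \<in> F \<Longrightarrow> g k \<in> C" shows "sum g F \<in> C"
  using assms(2)
proof (induction F rule: infinite_finite_induct)
  case (infinite A) thus ?case using cone_0[OF assms(1)] by simp
next
  case empty thus ?case using cone_0[OF assms(1)] by simp
next
  case (insert a A) thus ?case using cone_add[OF assms(1)] by simp
qed

lemma cone_trans: "closed_cone C \<Longrightarrow> b - a \<in> C \<Longrightarrow> c - b \<in> C \<Longrightarrow> c - a \<in> C"
  using cone_add[of C "b - a" "c - b"] by simp

lemma int_add: assumes "closed_cone C" "a \<in> interior C" "c \<in> C" shows "a + c \<in> interior C"
proof -
  obtain e where e: "e > 0" "ball a e \<subseteq> C" using assms(2) mem_interior by blast
  have "ball (a + c) e \<subseteq> C"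
  proof
    fix y assume "y \<in> ball (a + c) e"
    hence "y - c \<in> ball a e" by (simp add: dist_norm algebra_simps)
    hence "y - c \<in> C" using e by blast
    thus "y \<in> C" using cone_add[OF assms(1) _ assms(3)] by fastforce
  qed
  thus ?thesis using e mem_interior by blast
qed

lemma int_ge: "closed_cone C \<Longrightarrow> a \<in> interior C \<Longrightarrow> b - a \<in> C \<Longrightarrow> b \<in> interior C"
  using int_add[of C a "b - a"] by simp

lemma int_scale: assumes "closed_cone C" "a \<in> interior C" "t > 0" shows "t *\<^sub>R a \<in> interior C"
proof -
  obtain e where e: "e > 0" "ball a e \<subseteq> C" using assms(2) mem_interior by blast
  have "ball (t *\<^sub>R a) (t * e) \<subseteq> C"
  proof
    fix y assume "y \<in> ball (t *\<^sub>R a) (t * e)"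
    hence "dist (t *\<^sub>R a) y < t * e" by simp
    hence "dist a ((1/t) *\<^sub>R y) < e"
    proof -
      have eq: "a - (1/t) *\<^sub>R y = (1/t) *\<^sub>R (t *\<^sub>R a - y)" using assms(3)
        by (simp add: scaleR_diff_right)
      have "dist a ((1/t) *\<^sub>R y) = (1/t) * dist (t *\<^sub>R a) y"
        unfolding dist_norm eq using assms(3) by simp
      also have "\<dots> < (1/t) * (t * e)" using \<open>dist (t *\<^sub>R a) y < t * e\<close> assms(3)
        by (intro mult_strict_left_mono) auto
      also have "\<dots> = e" using assms(3) by simp
      finally show ?thesis .
    qed
    hence "(1/t) *\<^sub>R y \<in> C" using e by auto
    hence "t *\<^sub>R ((1/t) *\<^sub>R y) \<in> C" using cone_scale[OF assms(1)] assms(3) by (simp del: scaleR_scaleR)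
    thus "y \<in> C" using assms(3) by simp
  qed
  thus ?thesis using e assms(3) mem_interior by (metis mult_pos_pos)
qed

lemma int_ball: assumes "a \<in> interior C" shows "\<exists>\<rho>>0. \<forall>y. norm y < \<rho> \<longrightarrow> a + y \<in> C"
proof -
  obtain e where e: "e > 0" "ball a e \<subseteq> C" using assms(1) mem_interior by blast
  have "\<forall>y. norm y < e \<longrightarrow> a + y \<in> C" using e by (auto simp: dist_norm subset_iff)
  thus ?thesis using e by blast
qed

lemma dominate: assumes "closed_cone C" "a \<in> interior C" shows "\<exists>r>0. r *\<^sub>R a - z \<in> C"
proof -
  obtain \<rho> where r: "\<rho> > 0" "\<forall>y. norm y < \<rho> \<longrightarrow> a + y \<in> C" using int_ball[OF assms(2)] by blast
  define r where "r = (norm z + 1) * 2 / \<rho>"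
  have rp: "r > 0" using r unfolding r_def by (intro divide_pos_pos mult_pos_pos) (auto intro: add_nonneg_pos)
  have "norm (- (1/r) *\<^sub>R z) < \<rho>"
  proof -
    have "norm (- (1/r) *\<^sub>R z) = norm z * \<rho> / ((norm z + 1) * 2)" using rp r unfolding r_def by simp
    also have "\<dots> < \<rho>" using r(1) by (simp add: field_simps add_pos_nonneg)
      (metis add_nonneg_pos mult_nonneg_nonneg norm_ge_zero order_less_imp_le mult_pos_pos zero_less_numeral)
    finally show ?thesis .
  qed
  hence "a + (- (1/r) *\<^sub>R z) \<in> C" using r by blast
  hence "r *\<^sub>R (a + (- (1/r) *\<^sub>R z)) \<in> C" using cone_scale[OF assms(1)] rp by simp
  hence "r *\<^sub>R a - z \<in> C" using rp by (simp add: scaleR_add_right scaleR_diff_right)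
  thus ?thesis using rp by blast
qed

definition tc :: "'a::real_normed_vector set \<Rightarrow> real \<Rightarrow> 'a \<Rightarrow> 'a \<Rightarrow> bool" where
  "tc C \<eta> a y \<longleftrightarrow> y - (1 - \<eta>) *\<^sub>R a \<in> C \<and> (1 + \<eta>) *\<^sub>R a - y \<in> C"

lemma tc_near: assumes cc: "closed_cone C" and "a \<in> interior C" "\<eta> > 0" shows "\<exists>d>0. \<forall>y. dist y a < d \<longrightarrow> tc C \<eta> a y"
proof -
  obtain \<rho> where r: "\<rho> > 0" "\<forall>y. norm y < \<rho> \<longrightarrow> a + y \<in> C" using int_ball[OF assms(2)] by blast
  have "\<forall>y. dist y a < \<eta> * \<rho> \<longrightarrow> tc C \<eta> a y"
  proof (intro allI impI)
    fix y assume d: "dist y a < \<eta> * \<rho>"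
    have n1: "norm ((1/\<eta>) *\<^sub>R (y - a)) < \<rho>" using d assms(3)
      by (simp only: norm_scaleR dist_norm) (simp add: field_simps)
    have n2: "norm ((1/\<eta>) *\<^sub>R (a - y)) < \<rho>" using d assms(3)
      by (simp only: norm_scaleR dist_norm norm_minus_commute[of a]) (simp add: field_simps)
    have "a + (1/\<eta>) *\<^sub>R (y - a) \<in> C" using r n1 by blast
    hence c1: "\<eta> *\<^sub>R (a + (1/\<eta>) *\<^sub>R (y - a)) \<in> C" using assms(3) cone_scale[OF cc] by simp
    have "a + (1/\<eta>) *\<^sub>R (a - y) \<in> C" using r n2 by blast
    hence c2: "\<eta> *\<^sub>R (a + (1/\<eta>) *\<^sub>R (a - y)) \<in> C" using assms(3) cone_scale[OF cc] by simp
    have e1: "\<eta> *\<^sub>R (a + (1/\<eta>) *\<^sub>R (y - a)) = y - (1 - \<eta>) *\<^sub>R a"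
      using assms(3) by (simp add: scaleR_add_right algebra_simps)
    have e2: "\<eta> *\<^sub>R (a + (1/\<eta>) *\<^sub>R (a - y)) = (1 + \<eta>) *\<^sub>R a - y"
      using assms(3) by (simp add: scaleR_add_right algebra_simps)
    show "tc C \<eta> a y" using c1 c2 e1 e2 unfolding tc_def by simp
  qed
  thus ?thesis using r assms(3) by (metis mult_pos_pos)
qed



locale S =
  fixes C :: "'a::banach set" and f :: "'a \<Rightarrow> 'a" and x p :: 'a
  assumes cc: "closed_cone C"
    and fint: "f ` interior C \<subseteq> interior C"
    and sub: "subhomogeneous_on C (interior C) f"
    and tk: "typeK_order_preserving_on C (interior C) f"
    and pint: "p \<in> interior C" and pfix: "f p = p"
    and xint: "x \<in> interior C"
    and cpt: "compact (closure {(f ^^ k) x | k. True})"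
begin

lemma fi: "a \<in> interior C \<Longrightarrow> f a \<in> interior C" using fint by blast

lemma fni: "a \<in> interior C \<Longrightarrow> (f ^^ n) a \<in> interior C"
  by (induction n) (auto intro: fi)

lemma intC: "a \<in> interior C \<Longrightarrow> a \<in> C" using interior_subset by blast

lemma typeK: "a \<in> interior C \<Longrightarrow> b \<in> interior C \<Longrightarrow> b - a \<in> C \<Longrightarrow>
   \<exists>\<epsilon>>0. (f b - f a) - \<epsilon> *\<^sub>R (b - a) \<in> C"
  using tk unfolding typeK_order_preserving_on_def cone_le_def by blast

lemma mono: assumes "a \<in> interior C" "b \<in> interior C" "b - a \<in> C" shows "f b - f a \<in> C"
proof -
  obtain e where e: "e > 0" "(f b - f a) - e *\<^sub>R (b - a) \<in> C" using typeK assms by blast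
  have "e *\<^sub>R (b - a) \<in> C" using cone_scale[OF cc] e assms by simp
  from cone_add[OF cc e(2) this] show ?thesis by simp
qed

lemma monon: "a \<in> interior C \<Longrightarrow> b \<in> interior C \<Longrightarrow> b - a \<in> C \<Longrightarrow> (f^^n) b - (f^^n) a \<in> C"
  by (induction n) (auto intro: mono fni)

lemma up: "t \<ge> 1 \<Longrightarrow> a \<in> interior C \<Longrightarrow> t *\<^sub>R f a - f (t *\<^sub>R a) \<in> C"
  using sub unfolding subhomogeneous_on_def cone_le_def by blast

lemma down: assumes "0 < t" "t \<le> 1" "a \<in> interior C" shows "f (t *\<^sub>R a) - t *\<^sub>R f a \<in> C"
proof -
  have ta: "t *\<^sub>R a \<in> interior C" using int_scale[OF cc assms(3,1)] .
  have "(1/t) *\<^sub>R f (t *\<^sub>R a) - f ((1/t) *\<^sub>R (t *\<^sub>R a)) \<in> C"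
    using up[OF _ ta, of "1/t"] assms by simp
  hence "(1/t) *\<^sub>R f (t *\<^sub>R a) - f a \<in> C" using assms by simp
  hence "t *\<^sub>R ((1/t) *\<^sub>R f (t *\<^sub>R a) - f a) \<in> C" using cone_scale[OF cc] assms by simp
  thus ?thesis using assms by (simp add: scaleR_diff_right)
qed

lemma upn: assumes "t \<ge> 1" "a \<in> interior C" shows "t *\<^sub>R (f^^n) a - (f^^n) (t *\<^sub>R a) \<in> C"
proof (induction n)
  case 0 thus ?case using cone_0[OF cc] by simp
next
  case (Suc n)
  have i1: "(f^^n) (t *\<^sub>R a) \<in> interior C" using fni int_scale[OF cc assms(2)] assms(1) by simp
  have i2: "t *\<^sub>R (f^^n) a \<in> interior C" using fni int_scale[OF cc fni[OF assms(2)]] assms(1) by simp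
  have "f (t *\<^sub>R (f^^n) a) - f ((f^^n) (t *\<^sub>R a)) \<in> C" using mono[OF i1 i2 Suc] .
  moreover have "t *\<^sub>R f ((f^^n) a) - f (t *\<^sub>R (f^^n) a) \<in> C" using up[OF assms(1) fni[OF assms(2)]] .
  ultimately show ?case using cone_trans[OF cc] by simp
qed

lemma downn: assumes "0 < t" "t \<le> 1" "a \<in> interior C" shows "(f^^n) (t *\<^sub>R a) - t *\<^sub>R (f^^n) a \<in> C"
proof (induction n)
  case 0 thus ?case using cone_0[OF cc] by simp
next
  case (Suc n)
  have i1: "(f^^n) (t *\<^sub>R a) \<in> interior C" using fni int_scale[OF cc assms(3)] assms(1) by simp
  have i2: "t *\<^sub>R (f^^n) a \<in> interior C" using fni int_scale[OF cc fni[OF assms(3)]] assms(1) by simp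
  have "f ((f^^n) (t *\<^sub>R a)) - f (t *\<^sub>R (f^^n) a) \<in> C" using mono[OF i2 i1 Suc] .
  moreover have "f (t *\<^sub>R (f^^n) a) - t *\<^sub>R f ((f^^n) a) \<in> C" using down[OF assms(1,2) fni[OF assms(3)]] .
  ultimately show ?case using cone_trans[OF cc] by simp
qed

lemma tc_int: assumes "a \<in> interior C" "\<eta> < 1" "tc C \<eta> a b" shows "b \<in> interior C"
proof -
  have "(1 - \<eta>) *\<^sub>R a \<in> interior C" using int_scale[OF cc assms(1)] assms(2) by simp
  thus ?thesis using int_ge[OF cc] assms(3) unfolding tc_def by blast
qed

lemma tcn: assumes "a \<in> interior C" "0 < \<eta>" "\<eta> < 1" "tc C \<eta> a b" shows "tc C \<eta> ((f^^n) a) ((f^^n) b)"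
proof -
  have b: "b \<in> interior C" using tc_int assms by blast
  have i1: "(1 - \<eta>) *\<^sub>R a \<in> interior C" using int_scale[OF cc assms(1)] assms by simp
  have i2: "(1 + \<eta>) *\<^sub>R a \<in> interior C" using int_scale[OF cc assms(1)] assms by simp
  have "(f^^n) b - (f^^n) ((1 - \<eta>) *\<^sub>R a) \<in> C" using monon[OF i1 b] assms(4) unfolding tc_def by blast
  moreover have "(f^^n) ((1 - \<eta>) *\<^sub>R a) - (1 - \<eta>) *\<^sub>R (f^^n) a \<in> C" using downn[OF _ _ assms(1)] assms by simp
  moreover have "(f^^n) ((1 + \<eta>) *\<^sub>R a) - (f^^n) b \<in> C" using monon[OF b i2] assms(4) unfolding tc_def by blast
  moreover have "(1 + \<eta>) *\<^sub>R (f^^n) a - (f^^n) ((1 + \<eta>) *\<^sub>R a) \<in> C" using upn[OF _ assms(1)] assms by simp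
  ultimately show ?thesis unfolding tc_def using cone_trans[OF cc] by blast
qed

end


lemma choose_subseq:
  fixes Q :: "nat \<Rightarrow> nat \<Rightarrow> bool"
  assumes "\<And>n k. \<exists>i\<ge>k. Q n i"
  shows "\<exists>r. strict_mono r \<and> (\<forall>n. Q n (r n))"
proof -
  define r where "r = rec_nat (SOME i. Q 0 i) (\<lambda>n rn. SOME i. i \<ge> Suc rn \<and> Q (Suc n) i)"
  have r0: "r 0 = (SOME i. Q 0 i)" unfolding r_def by simp
  have rS: "r (Suc n) = (SOME i. i \<ge> Suc (r n) \<and> Q (Suc n) i)" for n unfolding r_def by simp
  have q0: "Q 0 (r 0)" unfolding r0 using assms[of 0 0] by (metis someI_ex)
  have qS: "r (Suc n) \<ge> Suc (r n) \<and> Q (Suc n) (r (Suc n))" for n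
    unfolding rS using assms[where n="Suc n" and k="Suc (r n)"] by (rule someI_ex)
  have "strict_mono r"
  proof (rule strict_mono_Suc_iff[THEN iffD2], rule allI)
    fix n show "r n < r (Suc n)" using qS[of n] by simp
  qed
  moreover have "\<forall>n. Q n (r n)"
  proof
    fix n show "Q n (r n)" using q0 qS by (cases n) auto
  qed
  ultimately show ?thesis by blast
qed

lemma tc_lim: assumes cc: "closed_cone C" and "y \<longlonglongrightarrow> l" "eventually (\<lambda>n. tc C \<eta> a (y n)) sequentially"
  shows "tc C \<eta> a l"
proof -
  have cl: "closed C" using cone_closed[OF cc] .
  have "l - (1 - \<eta>) *\<^sub>R a \<in> C"
    by (rule Lim_in_closed_set[OF cl _ _ tendsto_diff[OF assms(2) tendsto_const]])
      (use assms(3) in \<open>auto simp: tc_def elim: eventually_mono\<close>)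
  moreover have "(1 + \<eta>) *\<^sub>R a - l \<in> C"
    by (rule Lim_in_closed_set[OF cl _ _ tendsto_diff[OF tendsto_const assms(2)]])
      (use assms(3) in \<open>auto simp: tc_def elim: eventually_mono\<close>)
  ultimately show ?thesis unfolding tc_def by blast
qed

lemma tc_ev: assumes cc: "closed_cone C" and "y \<longlonglongrightarrow> a" "a \<in> interior C" "\<eta> > 0"
  shows "eventually (\<lambda>n. tc C \<eta> a (y n)) sequentially"
proof -
  obtain d where d: "d > 0" "\<forall>z. dist z a < d \<longrightarrow> tc C \<eta> a z" using tc_near[OF cc assms(3,4)] by blast
  have "eventually (\<lambda>n. dist (y n) a < d) sequentially" using assms(2) d(1) by (rule tendstoD)
  thus ?thesis by (rule eventually_mono) (use d in auto)
qed

lemma tc_eq: assumes cc: "closed_cone C" and "\<And>\<eta>. 0 < \<eta> \<Longrightarrow> \<eta> < 1 \<Longrightarrow> tc C \<eta> a b" shows "a = b"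
proof -
  define e where "e n = inverse (real (Suc n)) / 2" for n
  have e0: "e \<longlonglongrightarrow> 0" unfolding e_def using tendsto_divide[OF LIMSEQ_inverse_real_of_nat tendsto_const, of 2] by simp
  have ep: "0 < e n" "e n < 1" for n unfolding e_def by (auto simp: field_simps)
  have cl: "closed C" using cone_closed[OF cc] .
  have l1: "(\<lambda>n. b - (1 - e n) *\<^sub>R a) \<longlonglongrightarrow> b - (1 - 0) *\<^sub>R a" by (intro tendsto_intros e0)
  have l2: "(\<lambda>n. (1 + e n) *\<^sub>R a - b) \<longlonglongrightarrow> (1 + 0) *\<^sub>R a - b" by (intro tendsto_intros e0)
  have "b - a \<in> C"
    using Lim_in_closed_set[OF cl _ _ l1] assms(2)[OF ep] unfolding tc_def by simp
  moreover have "a - b \<in> C"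
    using Lim_in_closed_set[OF cl _ _ l2] assms(2)[OF ep] unfolding tc_def by simp
  ultimately show ?thesis using cone_antisym[OF cc, of "a - b"] by simp
qed

context S begin

abbreviation xs where "xs k \<equiv> (f ^^ k) x"
abbreviation K where "K \<equiv> closure {(f ^^ k) x | k. True}"

definition om where "om = {u. \<forall>k e. e > 0 \<longrightarrow> (\<exists>i\<ge>k. dist (xs i) u < e)}"

lemma fpn: "(f^^n) p = p" by (induction n) (auto simp: pfix)

lemma xsK: "xs k \<in> K"
proof -
  have "xs k \<in> {(f ^^ k) x | k. True}" by blast
  thus ?thesis using closure_subset by (rule subsetD[rotated])
qed

lemma bounds: "\<exists>L U. 0 < L \<and> L \<le> 1 \<and> 1 \<le> U \<and> (\<forall>y\<in>K. y - L *\<^sub>R p \<in> C \<and> U *\<^sub>R p - y \<in> C)"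
proof -
  obtain r where r: "r > 0" "r *\<^sub>R p - x \<in> C" using dominate[OF cc pint] by blast
  define U where "U = max r 1"
  have U1: "U \<ge> 1" unfolding U_def by simp
  have Ur: "(U - r) *\<^sub>R p \<in> C" using cone_scale[OF cc _ intC[OF pint]] unfolding U_def by simp
  have Ux: "U *\<^sub>R p - x \<in> C" using cone_add[OF cc Ur r(2)] by (simp add: algebra_simps)
  have Upi: "U *\<^sub>R p \<in> interior C" using int_scale[OF cc pint] U1 by simp
  have Uk: "U *\<^sub>R p - xs k \<in> C" for k
    using cone_trans[OF cc monon[OF xint Upi Ux, of k] upn[OF U1 pint, of k]] by (simp add: fpn)
  obtain s where s: "s > 0" "s *\<^sub>R x - p \<in> C" using dominate[OF cc xint] by blast
  define M where "M = max s 1"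
  define L where "L = 1 / M"
  have M1: "M \<ge> 1" unfolding M_def by simp
  have L: "0 < L" "L \<le> 1" unfolding L_def using M1 by auto
  have Ms: "(M - s) *\<^sub>R x \<in> C" using cone_scale[OF cc _ intC[OF xint]] unfolding M_def by simp
  have "M *\<^sub>R x - p \<in> C" using cone_add[OF cc Ms s(2)] by (simp add: algebra_simps)
  hence "L *\<^sub>R (M *\<^sub>R x - p) \<in> C" using cone_scale[OF cc] L by simp
  hence Lx: "x - L *\<^sub>R p \<in> C" using M1 unfolding L_def by (simp add: scaleR_diff_right)
  have Lpi: "L *\<^sub>R p \<in> interior C" using int_scale[OF cc pint] L by simp
  have Lk: "xs k - L *\<^sub>R p \<in> C" for k
    using cone_trans[OF cc downn[OF L pint, of k] monon[OF Lpi xint Lx, of k]] by (simp add: fpn)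
  define B where "B = {y. y - L *\<^sub>R p \<in> C \<and> U *\<^sub>R p - y \<in> C}"
  have "closed B"
  proof -
    have c1: "closed ((\<lambda>y. y - L *\<^sub>R p) -` C)"
      by (rule continuous_closed_vimage[OF cone_closed[OF cc]]) (intro continuous_intros)
    have c2: "closed ((\<lambda>y. U *\<^sub>R p - y) -` C)"
      by (rule continuous_closed_vimage[OF cone_closed[OF cc]]) (intro continuous_intros)
    note c1 c2
    moreover have "B = (\<lambda>y. y - L *\<^sub>R p) -` C \<inter> (\<lambda>y. U *\<^sub>R p - y) -` C" unfolding B_def by auto
    ultimately show ?thesis by (metis closed_Int)
  qed
  moreover have "{(f ^^ k) x | k. True} \<subseteq> B" unfolding B_def using Lk Uk by auto
  ultimately have "K \<subseteq> B" using closure_minimal by blast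
  thus ?thesis unfolding B_def using L U1 by blast
qed

lemma Kint: "y \<in> K \<Longrightarrow> y \<in> interior C"
proof -
  assume y: "y \<in> K"
  obtain L U where LU: "0 < L" "\<forall>y\<in>K. y - L *\<^sub>R p \<in> C \<and> U *\<^sub>R p - y \<in> C" using bounds by blast
  show ?thesis using int_ge[OF cc int_scale[OF cc pint LU(1)]] LU(2) y by blast
qed

lemma om_K: "om \<subseteq> K"
proof
  fix u assume u: "u \<in> om"
  show "u \<in> K" unfolding closure_approachable
  proof (intro allI impI)
    fix e :: real assume "e > 0"
    then obtain i where "dist (xs i) u < e" using u unfolding om_def by blast
    moreover have "xs i \<in> {(f ^^ k) x | k. True}" by blast
    ultimately show "\<exists>y\<in>{(f ^^ k) x | k. True}. dist y u < e" by blast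
  qed
qed

lemma om_int: "u \<in> om \<Longrightarrow> u \<in> interior C" using om_K Kint by blast

lemma om_closed: "closed om"
proof -
  have "closure om \<subseteq> om"
  proof
    fix u assume u: "u \<in> closure om"
    show "u \<in> om" unfolding om_def mem_Collect_eq
    proof (intro allI impI)
      fix k and e :: real assume e: "e > 0"
      have e2: "e/2 > 0" using e by simp
      obtain v where v: "v \<in> om" "dist v u < e/2" using u e2 closure_approachable[of u om] by blast
      obtain i where i: "i \<ge> k" "dist (xs i) v < e/2" using v(1) e2 unfolding om_def by blast
      have "dist (xs i) u \<le> dist (xs i) v + dist v u" by (rule dist_triangle)
      hence "dist (xs i) u < e" using i(2) v(2) by linarith
      thus "\<exists>i\<ge>k. dist (xs i) u < e" using i(1) by blast
    qed
  qed
  thus ?thesis using closure_subset_eq by blast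
qed

lemma om_compact: "compact om"
proof -
  have "compact (K \<inter> om)" using cpt om_closed by blast
  moreover have "K \<inter> om = om" using om_K by blast
  ultimately show ?thesis by simp
qed

lemma om_I: assumes "(\<lambda>i. xs (q i)) \<longlonglongrightarrow> u" "\<And>i. q i \<ge> i" shows "u \<in> om"
  unfolding om_def mem_Collect_eq
proof (intro allI impI)
  fix k and e :: real assume e: "e > 0"
  have "eventually (\<lambda>n. dist (xs (q n)) u < e) sequentially" using assms(1) e by (rule tendstoD)
  then obtain N where N: "\<forall>n\<ge>N. dist (xs (q n)) u < e" unfolding eventually_sequentially by blast
  have "q (max k N) \<ge> k" using assms(2)[of "max k N"] by simp
  moreover have "dist (xs (q (max k N))) u < e" using N by simp
  ultimately show "\<exists>i\<ge>k. dist (xs i) u < e" by blast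
qed

lemma om_D: assumes "u \<in> om" shows "\<exists>r. strict_mono r \<and> (\<lambda>i. xs (r i)) \<longlonglongrightarrow> u"
proof -
  have "\<exists>i\<ge>k. dist (xs i) u < inverse (real (Suc n))" for n k
    using assms unfolding om_def by simp
  then obtain r where r: "strict_mono r" "\<forall>n. dist (xs (r n)) u < inverse (real (Suc n))"
    using choose_subseq[where Q = "\<lambda>n i. dist (xs i) u < inverse (real (Suc n))"] by blast
  have "(\<lambda>i. xs (r i)) \<longlonglongrightarrow> u"
  proof (rule metric_LIMSEQ_I)
    fix e :: real assume e: "0 < e"
    obtain N where N: "inverse (real (Suc N)) < e" using reals_Archimedean[OF e] by blast
    have "\<forall>n\<ge>N. dist (xs (r n)) u < e"
    proof (intro allI impI)
      fix n assume "n \<ge> N"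
      hence "inverse (real (Suc n)) \<le> inverse (real (Suc N))" by (simp add: field_simps)
      thus "dist (xs (r n)) u < e" using r(2)[rule_format, of n] N by linarith
    qed
    thus "\<exists>no. \<forall>n\<ge>no. dist (xs (r n)) u < e" by blast
  qed
  thus ?thesis using r by blast
qed

lemma K_seq: fixes y :: "nat \<Rightarrow> 'a" assumes "\<And>n. y n \<in> K" shows "\<exists>l\<in>K. \<exists>s. strict_mono s \<and> (y \<circ> s) \<longlonglongrightarrow> l"
  using seq_compactE[OF compact_imp_seq_compact[OF cpt], of y] assms by blast

lemma om_ne: "om \<noteq> {}"
proof -
  obtain l s where "strict_mono s" "(xs \<circ> s) \<longlonglongrightarrow> l" using K_seq[of xs] xsK by blast
  hence "l \<in> om" using om_I[of s l] seq_suble by (simp add: o_def)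
  thus ?thesis by blast
qed

lemma om_inv: assumes "u \<in> om" shows "f u \<in> om"
proof -
  obtain r where r: "strict_mono r" "(\<lambda>i. xs (r i)) \<longlonglongrightarrow> u" using om_D[OF assms] by blast
  obtain w s where ws: "strict_mono s" "((\<lambda>i. xs (r i + 1)) \<circ> s) \<longlonglongrightarrow> w"
    using K_seq[of "\<lambda>i. xs (r i + 1)"] xsK by blast
  have wom: "w \<in> om"
  proof (rule om_I[of "\<lambda>i. r (s i) + 1"])
    show "(\<lambda>i. xs (r (s i) + 1)) \<longlonglongrightarrow> w" using ws(2) by (simp add: o_def)
    show "i \<le> r (s i) + 1" for i using seq_suble[OF r(1), of "s i"] seq_suble[OF ws(1), of i] by simp
  qed
  have "tc C \<eta> (f u) w" if "0 < \<eta>" "\<eta> < 1" for \<eta>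
  proof (rule tc_lim[OF cc ws(2)])
    have l: "(\<lambda>i. xs (r (s i))) \<longlonglongrightarrow> u" using LIMSEQ_subseq_LIMSEQ[OF r(2) ws(1)] by (simp add: o_def)
    show "\<forall>\<^sub>F n in sequentially. tc C \<eta> (f u) (((\<lambda>i. xs (r i + 1)) \<circ> s) n)"
      using tc_ev[OF cc l om_int[OF assms] that(1)]
    proof (rule eventually_mono)
      fix n assume "tc C \<eta> u (xs (r (s n)))"
      from tcn[OF om_int[OF assms] that this, of 1] show "tc C \<eta> (f u) (((\<lambda>i. xs (r i + 1)) \<circ> s) n)" by simp
    qed
  qed
  hence "f u = w" using tc_eq[OF cc] by blast
  thus ?thesis using wom by simp
qed

lemma om_back: assumes "u \<in> om" shows "\<exists>u'\<in>om. f u' = u"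
proof -
  obtain r where r: "strict_mono r" "(\<lambda>i. xs (r i)) \<longlonglongrightarrow> u" using om_D[OF assms] by blast
  have rS: "Suc (r (Suc i) - 1) = r (Suc i)" for i using seq_suble[OF r(1), of "Suc i"] by simp
  obtain w s where ws: "strict_mono s" "((\<lambda>i. xs (r (Suc i) - 1)) \<circ> s) \<longlonglongrightarrow> w"
    using K_seq[of "\<lambda>i. xs (r (Suc i) - 1)"] xsK by blast
  have wom: "w \<in> om"
  proof (rule om_I[of "\<lambda>i. r (Suc (s i)) - 1"])
    show "(\<lambda>i. xs (r (Suc (s i)) - 1)) \<longlonglongrightarrow> w" using ws(2) by (simp add: o_def)
    show "i \<le> r (Suc (s i)) - 1" for i using seq_suble[OF r(1), of "Suc (s i)"] seq_suble[OF ws(1), of i] by simp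
  qed
  have "tc C \<eta> (f w) u" if "0 < \<eta>" "\<eta> < 1" for \<eta>
  proof (rule tc_lim[OF cc])
    have sm: "strict_mono (Suc \<circ> s)" using ws(1) by (simp add: strict_mono_def)
    show "(\<lambda>i. xs (r (Suc (s i)))) \<longlonglongrightarrow> u" using LIMSEQ_subseq_LIMSEQ[OF r(2) sm] by (simp add: o_def)
    show "\<forall>\<^sub>F n in sequentially. tc C \<eta> (f w) (xs (r (Suc (s n))))"
      using tc_ev[OF cc ws(2) om_int[OF wom] that(1)]
    proof (rule eventually_mono)
      fix n assume tw: "tc C \<eta> w (((\<lambda>i. xs (r (Suc i) - 1)) \<circ> s) n)"
      have e: "f (xs (r (Suc (s n)) - 1)) = xs (r (Suc (s n)))"
      proof -
        have "f (xs (r (Suc (s n)) - 1)) = (f ^^ Suc (r (Suc (s n)) - 1)) x" by simp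
        thus ?thesis using rS[of "s n"] by simp
      qed
      from tcn[OF om_int[OF wom] that tw, of 1] show "tc C \<eta> (f w) (xs (r (Suc (s n))))"
        using e by simp
    qed
  qed
  hence "f w = u" using tc_eq[OF cc] by blast
  thus ?thesis using wom by blast
qed

lemma om_invn: "u \<in> om \<Longrightarrow> (f^^n) u \<in> om"
  by (induction n) (auto intro: om_inv)

lemma om_backn: "u \<in> om \<Longrightarrow> \<exists>u'\<in>om. (f^^n) u' = u"
proof (induction n arbitrary: u)
  case 0 thus ?case by auto
next
  case (Suc n)
  obtain u1 where u1: "u1 \<in> om" "f u1 = u" using om_back[OF Suc.prems] by blast
  obtain u' where "u' \<in> om" "(f^^n) u' = u1" using Suc.IH[OF u1(1)] by blast
  thus ?case using u1 by auto
qed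

end


lemma sum_split_shift: fixes m N :: nat shows "(\<Sum>k<N+m. g k) = (\<Sum>k<N. g k) + (\<Sum>j<m. (g (N + j) :: 'a::comm_monoid_add))"
  by (induction m) (simp_all add: add.assoc)

context S begin

definition good where "good \<beta> \<longleftrightarrow> 1 \<le> \<beta> \<and> (\<forall>u\<in>om. \<forall>v\<in>om. \<beta> *\<^sub>R v - u \<in> C)"
definition A where "A = Inf {\<beta>. good \<beta>}"
definition ext where "ext a b \<longleftrightarrow> (\<forall>A'<A. A' *\<^sub>R b - a \<notin> C)"

lemma om_bounds: "\<exists>L U. 0 < L \<and> L \<le> 1 \<and> 1 \<le> U \<and> (\<forall>y\<in>om. y - L *\<^sub>R p \<in> C \<and> U *\<^sub>R p - y \<in> C)"
  using bounds om_K by blast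

lemma good_ex: "\<exists>\<beta>. good \<beta>"
proof -
  obtain L U where LU: "0 < L" "L \<le> 1" "1 \<le> U" "\<forall>y\<in>om. y - L *\<^sub>R p \<in> C \<and> U *\<^sub>R p - y \<in> C"
    using om_bounds by blast
  have "good (U / L)" unfolding good_def
  proof (intro conjI ballI)
    show "1 \<le> U / L" using LU by (simp add: field_simps)
    fix u v assume uv: "u \<in> om" "v \<in> om"
    have "(U / L) *\<^sub>R (v - L *\<^sub>R p) \<in> C" using cone_scale[OF cc] LU uv by simp
    from cone_add[OF cc this] LU(4) uv
    have "(U / L) *\<^sub>R (v - L *\<^sub>R p) + (U *\<^sub>R p - u) \<in> C" by blast
    thus "(U / L) *\<^sub>R v - u \<in> C" using LU(1) by (simp add: algebra_simps)
  qed
  thus ?thesis by blast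
qed

lemma good_closed: "closed {\<beta>. good \<beta>}"
proof -
  have "{\<beta>. good \<beta>} = {\<beta>. 1 \<le> \<beta>} \<inter> (\<Inter>u\<in>om. \<Inter>v\<in>om. (\<lambda>\<beta>. \<beta> *\<^sub>R v - u) -` C)"
    unfolding good_def by auto
  moreover have "closed ((\<lambda>\<beta>::real. \<beta> *\<^sub>R v - u) -` C)" for u v
    by (rule continuous_closed_vimage[OF cone_closed[OF cc]]) (intro continuous_intros)
  moreover have "closed {\<beta>::real. 1 \<le> \<beta>}" by (simp add: closed_atLeast[unfolded atLeast_def])
  ultimately show ?thesis by (auto intro!: closed_Int closed_INT)
qed

lemma bdd: "bdd_below {\<beta>. good \<beta>}" unfolding bdd_below_def good_def by auto

lemma A_good: "good A"
  using closed_contains_Inf[OF _ bdd good_closed] good_ex unfolding A_def by auto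

lemma A_ge1: "1 \<le> A" using A_good unfolding good_def by simp

lemma A_min: assumes "A' < A" shows "\<not> good A'"
  using cInf_lower[OF _ bdd, of A'] assms unfolding A_def by force

lemma A_le: "u \<in> om \<Longrightarrow> v \<in> om \<Longrightarrow> A *\<^sub>R v - u \<in> C" using A_good unfolding good_def by blast

lemma mono_scale: assumes "b \<in> C" "s \<le> t" "s *\<^sub>R b - a \<in> C" shows "t *\<^sub>R b - a \<in> C"
proof -
  have "(t - s) *\<^sub>R b \<in> C" using cone_scale[OF cc] assms by simp
  from cone_add[OF cc this assms(3)] show ?thesis by (simp add: algebra_simps)
qed

lemma ext_lim:
  assumes A1: "A > 1" and a: "a \<in> interior C" and b: "b \<in> interior C"
    and ev: "\<And>\<eta>. 0 < \<eta> \<Longrightarrow> \<eta> < 1 \<Longrightarrow> eventually (\<lambda>i. tc C \<eta> a (ai i) \<and> tc C \<eta> b (bi i)) sequentially"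
    and nle: "\<And>B. B < A \<Longrightarrow> eventually (\<lambda>i. B *\<^sub>R bi i - ai i \<notin> C) sequentially"
  shows "ext a b"
  unfolding ext_def
proof (intro allI impI notI)
  fix A' assume A': "A' < A" "A' *\<^sub>R b - a \<in> C"
  define A2 where "A2 = max A' 1"
  have A2: "A2 < A" "1 \<le> A2" using A' A1 unfolding A2_def by auto
  have A2b: "A2 *\<^sub>R b - a \<in> C" using mono_scale[OF intC[OF b] _ A'(2)] unfolding A2_def by simp
  define B where "B = (A2 + A) / 2"
  define \<eta> where "\<eta> = (B - A2) / (A2 + B)"
  have B: "A2 < B" "B < A" using A2 unfolding B_def by auto
  have \<eta>: "0 < \<eta>" "\<eta> < 1" using B A2 unfolding \<eta>_def by (auto simp: field_simps)
  have p1: "1 + \<eta> = 2 * B / (A2 + B)" using B A2 unfolding \<eta>_def by (simp add: field_simps)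
  have p2: "1 - \<eta> = 2 * A2 / (A2 + B)" using B A2 unfolding \<eta>_def by (simp add: field_simps)
  have cB: "(1 + \<eta>) * A2 / (1 - \<eta>) = B" unfolding p1 p2
  proof -
    have h: "A2 + B > 0" "A2 > 0" using B A2 by auto
    have "2 * B / (A2 + B) * A2 = B * (2 * A2 / (A2 + B))" by simp
    thus "2 * B / (A2 + B) * A2 / (2 * A2 / (A2 + B)) = B" using h
      by (simp add: nonzero_divide_eq_eq)
  qed
  have "eventually (\<lambda>i. B *\<^sub>R bi i - ai i \<in> C) sequentially"
    using ev[OF \<eta>]
  proof (rule eventually_mono)
    fix i assume t: "tc C \<eta> a (ai i) \<and> tc C \<eta> b (bi i)"
    have t1: "(1 + \<eta>) *\<^sub>R a - ai i \<in> C" using t unfolding tc_def by blast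
    have t2: "(1 + \<eta>) *\<^sub>R (A2 *\<^sub>R b - a) \<in> C" using cone_scale[OF cc _ A2b] \<eta> by simp
    have t3: "((1 + \<eta>) * A2 / (1 - \<eta>)) *\<^sub>R (bi i - (1 - \<eta>) *\<^sub>R b) \<in> C"
      using cone_scale[OF cc _ conjunct1[OF t[unfolded tc_def, THEN conjunct2]]] \<eta> A2 by simp
    define c where "c = (1 + \<eta>) * A2 / (1 - \<eta>)"
    have hc: "c * (1 - \<eta>) = (1 + \<eta>) * A2" unfolding c_def using \<eta> by simp
    have s3: "c *\<^sub>R (bi i - (1 - \<eta>) *\<^sub>R b) = c *\<^sub>R bi i - ((1 + \<eta>) * A2) *\<^sub>R b"
      using hc by (simp add: scaleR_diff_right)
    have "(1 + \<eta>) *\<^sub>R a - ai i + (1 + \<eta>) *\<^sub>R (A2 *\<^sub>R b - a) + c *\<^sub>R (bi i - (1 - \<eta>) *\<^sub>R b) \<in> C"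
      using cone_add[OF cc cone_add[OF cc t1 t2] t3] unfolding c_def .
    moreover have "(1 + \<eta>) *\<^sub>R a - ai i + (1 + \<eta>) *\<^sub>R (A2 *\<^sub>R b - a) + c *\<^sub>R (bi i - (1 - \<eta>) *\<^sub>R b)
       = c *\<^sub>R bi i - ai i"
      unfolding s3 by (simp add: algebra_simps)
    ultimately have "c *\<^sub>R bi i - ai i \<in> C" by metis
    moreover have "c = B" using cB unfolding c_def .
    ultimately show "B *\<^sub>R bi i - ai i \<in> C" by simp
  qed
  moreover have "eventually (\<lambda>i. B *\<^sub>R bi i - ai i \<notin> C) sequentially" using nle[OF B(2)] .
  ultimately have "eventually (\<lambda>i. False) sequentially" by (rule eventually_elim2) simp
  thus False by simp
qed

end


context S begin

lemma om_seq2: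
  fixes u v :: "nat \<Rightarrow> 'a"
  assumes "\<And>n. u n \<in> om" "\<And>n. v n \<in> om"
  shows "\<exists>a\<in>om. \<exists>b\<in>om. \<exists>r. strict_mono r \<and> (\<lambda>i. u (r i)) \<longlonglongrightarrow> a \<and> (\<lambda>i. v (r i)) \<longlonglongrightarrow> b"
proof -
  have sc: "seq_compact om" using compact_imp_seq_compact[OF om_compact] .
  obtain a r1 where a: "a \<in> om" "strict_mono r1" "(u \<circ> r1) \<longlonglongrightarrow> a" using seq_compactE[OF sc, of u] assms by blast
  obtain b r2 where b: "b \<in> om" "strict_mono r2" "((v \<circ> r1) \<circ> r2) \<longlonglongrightarrow> b" using seq_compactE[OF sc, of "v \<circ> r1"] assms by auto
  have "strict_mono (r1 \<circ> r2)" using a(2) b(2) by (simp add: strict_mono_def)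
  moreover have "(\<lambda>i. u ((r1 \<circ> r2) i)) \<longlonglongrightarrow> a" using LIMSEQ_subseq_LIMSEQ[OF a(3) b(2)] by (simp add: o_def)
  moreover have "(\<lambda>i. v ((r1 \<circ> r2) i)) \<longlonglongrightarrow> b" using b(3) by (simp add: o_def)
  ultimately show ?thesis using a(1) b(1) by blast
qed

lemma omC: "u \<in> om \<Longrightarrow> u \<in> C" using om_int intC by blast

lemma ext_ex: assumes A1: "A > 1" shows "\<exists>a\<in>om. \<exists>b\<in>om. ext a b"
proof -
  define An where "An n = A - (A - 1) / (real n + 2)" for n
  have An: "An n < A" "1 \<le> An n" for n
  proof -
    have "(A - 1) / (real n + 2) \<le> (A - 1) / 1" using A1 by (intro divide_left_mono) auto
    thus "1 \<le> An n" unfolding An_def by simp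
    show "An n < A" unfolding An_def using A1 by simp
  qed
  have "\<exists>uv. fst uv \<in> om \<and> snd uv \<in> om \<and> An n *\<^sub>R snd uv - fst uv \<notin> C" for n
    using A_min[OF An(1)[of n]] An(2)[of n] unfolding good_def by auto
  then obtain uv where uv: "\<And>n. fst (uv n) \<in> om \<and> snd (uv n) \<in> om \<and> An n *\<^sub>R snd (uv n) - fst (uv n) \<notin> C"
    by metis
  define u where "u n = fst (uv n)" for n
  define v where "v n = snd (uv n)" for n
  have uvo: "u n \<in> om" "v n \<in> om" "An n *\<^sub>R v n - u n \<notin> C" for n using uv unfolding u_def v_def by auto
  obtain a b r where abr: "a \<in> om" "b \<in> om" "strict_mono r" "(\<lambda>i. u (r i)) \<longlonglongrightarrow> a" "(\<lambda>i. v (r i)) \<longlonglongrightarrow> b"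
    using om_seq2[of u v] uvo by blast
  have "ext a b"
  proof (rule ext_lim[OF A1 om_int[OF abr(1)] om_int[OF abr(2)]])
    fix \<eta> :: real assume "0 < \<eta>" "\<eta> < 1"
    show "\<forall>\<^sub>F i in sequentially. tc C \<eta> a (u (r i)) \<and> tc C \<eta> b (v (r i))"
      using tc_ev[OF cc abr(4) om_int[OF abr(1)] \<open>0 < \<eta>\<close>] tc_ev[OF cc abr(5) om_int[OF abr(2)] \<open>0 < \<eta>\<close>]
      by (rule eventually_conj)
  next
    fix B assume B: "B < A"
    obtain N where N: "(A - 1) / (A - B) < real N" using reals_Archimedean2 by blast
    have "\<forall>i\<ge>N. B *\<^sub>R v (r i) - u (r i) \<notin> C"
    proof (intro allI impI notI)
      fix i assume i: "N \<le> i" and c: "B *\<^sub>R v (r i) - u (r i) \<in> C"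
      have "real N \<le> real (r i)" using seq_suble[OF abr(3), of i] i by simp
      hence lt: "(A - 1) / (A - B) < real (r i) + 2" using N by simp
      have "(A - 1) / (real (r i) + 2) < A - B"
        using lt B by (simp add: field_simps)
      hence "B \<le> An (r i)" unfolding An_def by simp
      from mono_scale[OF omC[OF uvo(2)] this c] uvo(3) show False by blast
    qed
    thus "\<forall>\<^sub>F i in sequentially. B *\<^sub>R v (r i) - u (r i) \<notin> C" unfolding eventually_sequentially by blast
  qed
  thus ?thesis using abr by blast
qed

lemma ext_back: assumes A1: "A > 1" and ab: "a \<in> om" "b \<in> om" and e: "ext ((f^^m) a) ((f^^m) b)"
  shows "ext a b"
  unfolding ext_def
proof (intro allI impI notI)
  fix A' assume A': "A' < A" "A' *\<^sub>R b - a \<in> C"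
  define A2 where "A2 = max A' 1"
  have A2: "A2 < A" "1 \<le> A2" using A' A1 unfolding A2_def by auto
  have A2b: "A2 *\<^sub>R b - a \<in> C" using mono_scale[OF omC[OF ab(2)] _ A'(2)] unfolding A2_def by simp
  have bi: "A2 *\<^sub>R b \<in> interior C" using int_scale[OF cc om_int[OF ab(2)]] A2 by simp
  have "(f^^m) (A2 *\<^sub>R b) - (f^^m) a \<in> C" using monon[OF om_int[OF ab(1)] bi A2b] .
  moreover have "A2 *\<^sub>R (f^^m) b - (f^^m) (A2 *\<^sub>R b) \<in> C" using upn[OF A2(2) om_int[OF ab(2)]] .
  ultimately have "A2 *\<^sub>R (f^^m) b - (f^^m) a \<in> C" using cone_trans[OF cc] by blast
  thus False using e A2(1) unfolding ext_def by blast
qed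

lemma ext_fin: assumes A1: "A > 1" shows "\<exists>u\<in>om. \<exists>v\<in>om. \<forall>n\<le>N. ext ((f^^n) u) ((f^^n) v)"
proof -
  obtain a b where ab: "a \<in> om" "b \<in> om" "ext a b" using ext_ex[OF A1] by blast
  obtain u where u: "u \<in> om" "(f^^N) u = a" using om_backn[OF ab(1)] by blast
  obtain v where v: "v \<in> om" "(f^^N) v = b" using om_backn[OF ab(2)] by blast
  have "ext ((f^^n) u) ((f^^n) v)" if n: "n \<le> N" for n
  proof (rule ext_back[OF A1 om_invn[OF u(1)] om_invn[OF v(1)], of "N - n"])
    have "(f^^(N - n)) \<circ> (f^^n) = f^^N" using n by (simp flip: funpow_add)
    hence "(f^^(N - n)) ((f^^n) y) = (f^^N) y" for y by (metis comp_apply)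
    thus "ext ((f ^^ (N - n)) ((f ^^ n) u)) ((f ^^ (N - n)) ((f ^^ n) v))" using u v ab by simp
  qed
  thus ?thesis using u v by blast
qed

lemma ext_inf: assumes A1: "A > 1" shows "\<exists>u\<in>om. \<exists>v\<in>om. \<forall>n. ext ((f^^n) u) ((f^^n) v)"
proof -
  have "\<exists>uv. fst uv \<in> om \<and> snd uv \<in> om \<and> (\<forall>n\<le>N. ext ((f^^n) (fst uv)) ((f^^n) (snd uv)))" for N
    using ext_fin[OF A1, of N] by auto
  then obtain uv where uv: "\<And>N. fst (uv N) \<in> om \<and> snd (uv N) \<in> om \<and> (\<forall>n\<le>N. ext ((f^^n) (fst (uv N))) ((f^^n) (snd (uv N))))"
    by metis
  define u where "u n = fst (uv n)" for n
  define v where "v n = snd (uv n)" for n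
  have uvo: "u N \<in> om" "v N \<in> om" "\<And>n. n \<le> N \<Longrightarrow> ext ((f^^n) (u N)) ((f^^n) (v N))" for N
    using uv unfolding u_def v_def by auto
  obtain a b r where abr: "a \<in> om" "b \<in> om" "strict_mono r" "(\<lambda>i. u (r i)) \<longlonglongrightarrow> a" "(\<lambda>i. v (r i)) \<longlonglongrightarrow> b"
    using om_seq2[of u v] uvo by blast
  have "ext ((f^^n) a) ((f^^n) b)" for n
  proof (rule ext_lim[OF A1 om_int[OF om_invn[OF abr(1)]] om_int[OF om_invn[OF abr(2)]]])
    fix \<eta> :: real assume \<eta>: "0 < \<eta>" "\<eta> < 1"
    have "\<forall>\<^sub>F i in sequentially. tc C \<eta> a (u (r i)) \<and> tc C \<eta> b (v (r i))"
      using tc_ev[OF cc abr(4) om_int[OF abr(1)] \<open>0 < \<eta>\<close>] tc_ev[OF cc abr(5) om_int[OF abr(2)] \<open>0 < \<eta>\<close>]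
      by (rule eventually_conj)
    thus "\<forall>\<^sub>F i in sequentially. tc C \<eta> ((f^^n) a) ((f^^n) (u (r i))) \<and> tc C \<eta> ((f^^n) b) ((f^^n) (v (r i)))"
      by (rule eventually_mono) (use tcn[OF om_int[OF abr(1)] \<eta>] tcn[OF om_int[OF abr(2)] \<eta>] in blast)
  next
    fix B assume B: "B < A"
    have "\<forall>i\<ge>n. B *\<^sub>R (f^^n) (v (r i)) - (f^^n) (u (r i)) \<notin> C"
    proof (intro allI impI)
      fix i assume "n \<le> i"
      hence "n \<le> r i" using seq_suble[OF abr(3), of i] by simp
      thus "B *\<^sub>R (f^^n) (v (r i)) - (f^^n) (u (r i)) \<notin> C" using uvo(3)[of n "r i"] B unfolding ext_def by blast
    qed
    thus "\<forall>\<^sub>F i in sequentially. B *\<^sub>R (f^^n) (v (r i)) - (f^^n) (u (r i)) \<notin> C"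
      unfolding eventually_sequentially by blast
  qed
  thus ?thesis using abr by blast
qed

end


context S begin

lemma R1: assumes uv: "u \<in> om" "v \<in> om" and th: "0 < \<theta>" "\<theta> < 1"
  shows "\<exists>m. v - \<theta> *\<^sub>R (f^^m) u \<in> C"
proof -
  define \<eta> where "\<eta> = (1 - \<theta>) / (1 + \<theta>)"
  have \<eta>: "0 < \<eta>" "\<eta> < 1" using th unfolding \<eta>_def by (auto simp: field_simps)
  have q: "(1 - \<eta>) / (1 + \<eta>) = \<theta>" using th unfolding \<eta>_def by (simp add: field_simps)
  obtain d1 where d1: "d1 > 0" "\<forall>y. dist y u < d1 \<longrightarrow> tc C \<eta> u y" using tc_near[OF cc om_int[OF uv(1)] \<eta>(1)] by blast
  obtain d2 where d2: "d2 > 0" "\<forall>y. dist y v < d2 \<longrightarrow> tc C \<eta> v y" using tc_near[OF cc om_int[OF uv(2)] \<eta>(1)] by blast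
  obtain i where i: "dist (xs i) u < d1" using uv(1) d1(1) unfolding om_def by blast
  obtain j where j: "j \<ge> i" "dist (xs j) v < d2" using uv(2) d2(1) unfolding om_def by blast
  have t1: "tc C \<eta> u (xs i)" using d1 i by blast
  have t2: "tc C \<eta> v (xs j)" using d2 j by blast
  have "tc C \<eta> ((f^^(j - i)) u) ((f^^(j - i)) (xs i))" using tcn[OF om_int[OF uv(1)] \<eta> t1] .
  moreover have "(f^^(j - i)) (xs i) = xs j"
  proof -
    have "(f^^(j - i)) \<circ> (f^^i) = f^^j" using j(1) by (simp flip: funpow_add)
    thus ?thesis by (metis comp_apply)
  qed
  ultimately have a: "xs j - (1 - \<eta>) *\<^sub>R (f^^(j - i)) u \<in> C" unfolding tc_def by simp
  have b: "(1 + \<eta>) *\<^sub>R v - xs j \<in> C" using t2 unfolding tc_def by simp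
  have "(1 + \<eta>) *\<^sub>R v - (1 - \<eta>) *\<^sub>R (f^^(j - i)) u \<in> C" using cone_trans[OF cc a b] .
  hence "(1 / (1 + \<eta>)) *\<^sub>R ((1 + \<eta>) *\<^sub>R v - (1 - \<eta>) *\<^sub>R (f^^(j - i)) u) \<in> C"
    using cone_scale[OF cc] \<eta> by simp
  moreover have "(1 / (1 + \<eta>)) *\<^sub>R ((1 + \<eta>) *\<^sub>R v - (1 - \<eta>) *\<^sub>R (f^^(j - i)) u) = v - \<theta> *\<^sub>R (f^^(j - i)) u"
    using \<eta> q[symmetric] by (simp add: scaleR_diff_right)
  ultimately show ?thesis by metis
qed

lemma domstep: assumes uv: "u \<in> om" "v \<in> om"
  shows "\<exists>\<epsilon>>0. (A *\<^sub>R (f^^Suc n) v - (f^^Suc n) u) - \<epsilon> *\<^sub>R (A *\<^sub>R (f^^n) v - (f^^n) u) \<in> C"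
proof -
  have ui: "(f^^n) u \<in> interior C" using om_int[OF om_invn[OF uv(1)]] .
  have vi: "(f^^n) v \<in> interior C" using om_int[OF om_invn[OF uv(2)]] .
  have Avi: "A *\<^sub>R (f^^n) v \<in> interior C" using int_scale[OF cc vi] A_ge1 by simp
  have le: "A *\<^sub>R (f^^n) v - (f^^n) u \<in> C" using A_le om_invn uv by blast
  obtain e where e: "e > 0" "(f (A *\<^sub>R (f^^n) v) - f ((f^^n) u)) - e *\<^sub>R (A *\<^sub>R (f^^n) v - (f^^n) u) \<in> C"
    using typeK[OF ui Avi le] by blast
  have "A *\<^sub>R f ((f^^n) v) - f (A *\<^sub>R (f^^n) v) \<in> C" using up[OF A_ge1 vi] .
  from cone_add[OF cc this e(2)]
  have "(A *\<^sub>R (f^^Suc n) v - (f^^Suc n) u) - e *\<^sub>R (A *\<^sub>R (f^^n) v - (f^^n) u) \<in> C"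
    by (simp add: algebra_simps)
  thus ?thesis using e(1) by blast
qed

lemma domsum: assumes uv: "u \<in> om" "v \<in> om"
  defines "w \<equiv> \<lambda>n. A *\<^sub>R (f^^n) v - (f^^n) u"
  shows "\<exists>c>0. w N - c *\<^sub>R (\<Sum>k<N. w k) \<in> C"
proof (induction N)
  case 0
  have "w 0 \<in> C" unfolding w_def using A_le uv by simp
  thus ?case by (intro exI[of _ 1]) simp
next
  case (Suc N)
  obtain c where c: "c > 0" "w N - c *\<^sub>R (\<Sum>k<N. w k) \<in> C" using Suc.IH by blast
  obtain \<epsilon> where e: "\<epsilon> > 0" "w (Suc N) - \<epsilon> *\<^sub>R w N \<in> C" using domstep[OF uv, of N] unfolding w_def by blast
  define k where "k = \<epsilon> / (1 + c)"
  have k0: "k * (1 + c) = \<epsilon>" unfolding k_def using c by simp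
  have k: "k > 0" "\<epsilon> = k + k * c"
  proof -
    show "k > 0" using c e unfolding k_def by simp
    have "k * (1 + c) = k + k * c" by (simp add: distrib_left)
    thus "\<epsilon> = k + k * c" using k0 by simp
  qed
  have "(w (Suc N) - \<epsilon> *\<^sub>R w N) + k *\<^sub>R (w N - c *\<^sub>R (\<Sum>k<N. w k)) \<in> C"
    using cone_add[OF cc e(2) cone_scale[OF cc _ c(2)]] k by simp
  moreover have "(w (Suc N) - \<epsilon> *\<^sub>R w N) + k *\<^sub>R (w N - c *\<^sub>R (\<Sum>k<N. w k))
      = w (Suc N) - (k * c) *\<^sub>R (\<Sum>k<Suc N. w k)"
    unfolding k(2) by (simp add: algebra_simps)
  ultimately show ?case using k c by (metis mult_pos_pos)
qed

lemma no_A_gt: assumes A1: "A > 1" shows False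
proof -
  obtain u v where uv: "u \<in> om" "v \<in> om" and ex: "\<And>n. ext ((f^^n) u) ((f^^n) v)" using ext_inf[OF A1] by blast
  define un where "un n = (f^^n) u" for n
  define vn where "vn n = (f^^n) v" for n
  define w where "w n = A *\<^sub>R vn n - un n" for n
  have uno: "un n \<in> om" "vn n \<in> om" for n unfolding un_def vn_def using om_invn uv by auto
  define \<theta> where "\<theta> = (1 + A) / (2 * A)"
  have th: "0 < \<theta>" "\<theta> < 1" using A1 unfolding \<theta>_def by (auto simp: field_simps)
  define A1' where "A1' = A * \<theta>"
  have A1': "A1' = (1 + A) / 2" "A1' > 1" using A1 unfolding A1'_def \<theta>_def by (auto simp: field_simps)
  obtain m where m: "v - \<theta> *\<^sub>R (f^^m) u \<in> C" using R1[OF uv(1) uv(2) th] by blast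
  have vk: "vn k - \<theta> *\<^sub>R un (k + m) \<in> C" for k
  proof -
    have mi: "(f^^m) u \<in> interior C" using om_int[OF om_invn[OF uv(1)]] .
    have ti: "\<theta> *\<^sub>R (f^^m) u \<in> interior C" using int_scale[OF cc mi th(1)] .
    have "(f^^k) v - (f^^k) (\<theta> *\<^sub>R (f^^m) u) \<in> C" using monon[OF ti om_int[OF uv(2)] m] .
    moreover have "(f^^k) (\<theta> *\<^sub>R (f^^m) u) - \<theta> *\<^sub>R (f^^k) ((f^^m) u) \<in> C"
      using downn[OF th(1) less_imp_le[OF th(2)] mi] .
    moreover have "(f^^k) ((f^^m) u) = un (k + m)" unfolding un_def by (simp add: funpow_add)
    ultimately show ?thesis using cone_trans[OF cc] unfolding vn_def by metis
  qed
  obtain L U where LU: "0 < L" "L \<le> 1" "1 \<le> U" "\<forall>y\<in>om. y - L *\<^sub>R p \<in> C \<and> U *\<^sub>R p - y \<in> C"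
    using om_bounds by blast
  obtain N where N: "(1 + real m * (U - L)) / ((A1' - 1) * L) < real N" using reals_Archimedean2 by blast
  define t where "t = (A1' - 1) * real N * L - real m * (U - L)"
  have t1: "t \<ge> 1"
  proof -
    have pos: "(A1' - 1) * L > 0" using A1' LU by simp
    have "1 + real m * (U - L) < real N * ((A1' - 1) * L)" using N pos by (simp add: field_simps)
    thus ?thesis unfolding t_def by (simp add: algebra_simps)
  qed
  define SV where "SV = (\<Sum>k<N. vn k)"
  define SW where "SW = (\<Sum>k<N. un (k + m))"
  define SA where "SA = (\<Sum>j<m. un j)"
  define SB where "SB = (\<Sum>j<m. un (N + j))"
  define SU where "SU = (\<Sum>k<N. un k)"
  have split: "SU + SB = SA + SW"
  proof -
    have "(\<Sum>k<N+m. un k) = SU + SB" unfolding SU_def SB_def by (rule sum_split_shift)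
    moreover have "(\<Sum>k<m+N. un k) = SA + (\<Sum>j<N. un (m + j))" unfolding SA_def by (rule sum_split_shift)
    moreover have "(\<Sum>j<N. un (m + j)) = SW" unfolding SW_def by (simp add: add.commute)
    ultimately show ?thesis by (simp add: add.commute)
  qed
  have c1: "A *\<^sub>R SV - A1' *\<^sub>R SW \<in> C"
  proof -
    have "(\<Sum>k<N. A *\<^sub>R (vn k - \<theta> *\<^sub>R un (k + m))) \<in> C"
      by (rule cone_sum[OF cc]) (use cone_scale[OF cc _ vk] A1 in auto)
    moreover have "(\<Sum>k<N. A *\<^sub>R (vn k - \<theta> *\<^sub>R un (k + m))) = A *\<^sub>R SV - A1' *\<^sub>R SW"
      unfolding SV_def SW_def A1'_def
      by (simp add: scaleR_diff_right sum_subtractf scaleR_sum_right)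
    ultimately show ?thesis by simp
  qed
  have c2: "SW - (real N * L) *\<^sub>R p \<in> C"
  proof -
    have "(\<Sum>k<N. un (k + m) - L *\<^sub>R p) \<in> C" by (rule cone_sum[OF cc]) (use LU(4) uno in blast)
    moreover have "(\<Sum>k<N. un (k + m) - L *\<^sub>R p) = SW - (real N * L) *\<^sub>R p"
      unfolding SW_def by (simp add: sum_subtractf sum_constant_scaleR)
    ultimately show ?thesis by simp
  qed
  have c3: "SB - (real m * L) *\<^sub>R p \<in> C"
  proof -
    have "(\<Sum>j<m. un (N + j) - L *\<^sub>R p) \<in> C" by (rule cone_sum[OF cc]) (use LU(4) uno in blast)
    moreover have "(\<Sum>j<m. un (N + j) - L *\<^sub>R p) = SB - (real m * L) *\<^sub>R p"
      unfolding SB_def by (simp add: sum_subtractf sum_constant_scaleR)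
    ultimately show ?thesis by simp
  qed
  have c4: "(real m * U) *\<^sub>R p - SA \<in> C"
  proof -
    have "(\<Sum>j<m. U *\<^sub>R p - un j) \<in> C" by (rule cone_sum[OF cc]) (use LU(4) uno in blast)
    moreover have "(\<Sum>j<m. U *\<^sub>R p - un j) = (real m * U) *\<^sub>R p - SA"
      unfolding SA_def by (simp add: sum_subtractf sum_constant_scaleR)
    ultimately show ?thesis by simp
  qed
  have T: "(\<Sum>k<N. w k) = A *\<^sub>R SV - SU"
    unfolding w_def SV_def SU_def by (simp add: sum_subtractf scaleR_sum_right)
  have c5: "(A *\<^sub>R SV - A1' *\<^sub>R SW) + (A1' - 1) *\<^sub>R (SW - (real N * L) *\<^sub>R p)
      + (SB - (real m * L) *\<^sub>R p) + ((real m * U) *\<^sub>R p - SA) \<in> C"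
  proof -
    have "0 \<le> A1' - 1" using A1'(2) by simp
    from cone_add[OF cc cone_add[OF cc cone_add[OF cc c1 cone_scale[OF cc this c2]] c3] c4]
    show ?thesis .
  qed
  have SU: "SU = SA + SW - SB" using split by (simp add: algebra_simps)
  have "(A *\<^sub>R SV - A1' *\<^sub>R SW) + (A1' - 1) *\<^sub>R (SW - (real N * L) *\<^sub>R p)
      + (SB - (real m * L) *\<^sub>R p) + ((real m * U) *\<^sub>R p - SA) = (A *\<^sub>R SV - SU) - t *\<^sub>R p"
    unfolding SU t_def by (simp add: algebra_simps)
  with c5 T have Tt: "(\<Sum>k<N. w k) - t *\<^sub>R p \<in> C" by simp
  have Tp: "(\<Sum>k<N. w k) - p \<in> C"
  proof -
    have "(t - 1) *\<^sub>R p \<in> C" using cone_scale[OF cc _ intC[OF pint]] t1 by simp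
    from cone_add[OF cc Tt this] show ?thesis by (simp add: algebra_simps)
  qed
  obtain c where c: "c > 0" "w N - c *\<^sub>R (\<Sum>k<N. w k) \<in> C"
    using domsum[OF uv(1) uv(2), of N] unfolding w_def un_def vn_def by blast
  have "w N - c *\<^sub>R p \<in> C"
  proof -
    have "c *\<^sub>R ((\<Sum>k<N. w k) - p) \<in> C" using cone_scale[OF cc _ Tp] c by simp
    from cone_add[OF cc c(2) this] show ?thesis by (simp add: algebra_simps)
  qed
  moreover have "(c / U) *\<^sub>R (U *\<^sub>R p - vn N) \<in> C" using cone_scale[OF cc] LU(3,4) uno c by simp
  ultimately have "w N - c *\<^sub>R p + (c / U) *\<^sub>R (U *\<^sub>R p - vn N) \<in> C" using cone_add[OF cc] by blast
  moreover have "w N - c *\<^sub>R p + (c / U) *\<^sub>R (U *\<^sub>R p - vn N) = (A - c / U) *\<^sub>R vn N - un N"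
    unfolding w_def using LU(3) by (simp add: algebra_simps)
  ultimately have "(A - c / U) *\<^sub>R vn N - un N \<in> C" by simp
  moreover have "A - c / U < A" using c LU(3) by simp
  ultimately show False using ex[of N] unfolding ext_def un_def vn_def by blast
qed

end


context S begin

lemma A_eq1: "A = 1" using A_ge1 no_A_gt by force

lemma om_single: assumes "u \<in> om" "v \<in> om" shows "u = v"
proof -
  have "v - u \<in> C" using A_le[OF assms] A_eq1 by simp
  moreover have "u - v \<in> C" using A_le[OF assms(2,1)] A_eq1 by simp
  ultimately show ?thesis using cone_antisym[OF cc, of "u - v"] by simp
qed

lemma final: "\<exists>z\<in>interior C. f z = z \<and> (\<lambda>k. (f ^^ k) x) \<longlonglongrightarrow> z"
proof -
  obtain z where z: "z \<in> om" using om_ne by blast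
  have fz: "f z = z" using om_single[OF om_inv[OF z] z] .
  have "(\<lambda>k. (f ^^ k) x) \<longlonglongrightarrow> z"
  proof (rule ccontr)
    assume "\<not> (\<lambda>k. (f ^^ k) x) \<longlonglongrightarrow> z"
    then obtain e where e: "e > 0" "\<forall>no. \<exists>n\<ge>no. \<not> dist (xs n) z < e"
      unfolding LIMSEQ_def by blast
    have h: "\<And>n k. \<exists>i\<ge>k. \<not> dist (xs i) z < e" using e(2) by blast
    have "\<exists>r::nat\<Rightarrow>nat. strict_mono r \<and> (\<forall>n. \<not> dist (xs (r n)) z < e)"
      using choose_subseq[of "\<lambda>n i. \<not> dist (xs i) z < e", OF h] by simp
    then obtain r :: "nat \<Rightarrow> nat" where r: "strict_mono r" "\<forall>n. \<not> dist (xs (r n)) z < e" by blast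
    obtain l s where ls: "l \<in> K" "strict_mono s" "((\<lambda>n. xs (r n)) \<circ> s) \<longlonglongrightarrow> l"
      using K_seq[of "\<lambda>n. xs (r n)"] xsK by blast
    have "l \<in> om"
    proof (rule om_I[of "\<lambda>i. r (s i)"])
      show "(\<lambda>i. xs (r (s i))) \<longlonglongrightarrow> l" using ls(3) by (simp add: o_def)
      show "i \<le> r (s i)" for i using seq_suble[OF r(1), of "s i"] seq_suble[OF ls(2), of i] by simp
    qed
    hence "l = z" using om_single z by blast
    hence "((\<lambda>n. xs (r n)) \<circ> s) \<longlonglongrightarrow> z" using ls(3) by simp
    hence "eventually (\<lambda>n. dist (((\<lambda>n. xs (r n)) \<circ> s) n) z < e) sequentially"
      using e(1) by (rule tendstoD)
    then obtain n where "dist (xs (r (s n))) z < e" unfolding eventually_sequentially by auto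
    thus False using r(2) by blast
  qed
  thus ?thesis using fz om_int[OF z] by blast
qed

end

theorem mainTheorem1:
  fixes C :: "'a::banach set" and f :: "'a \<Rightarrow> 'a" and x :: 'a
  assumes "closed_cone C"
    and "interior C \<noteq> {}"
    and "f ` interior C \<subseteq> interior C"
    and "subhomogeneous_on C (interior C) f"
    and "typeK_order_preserving_on C (interior C) f"
    and "\<exists>p\<in>interior C. f p = p"
    and "x \<in> interior C"
    and "compact (closure {(f ^^ k) x | k. True})"
  shows "\<exists>p\<in>interior C. f p = p \<and> (\<lambda>k. (f ^^ k) x) \<longlonglongrightarrow> p"
proof -
  obtain p where p: "p \<in> interior C" "f p = p" using assms(6) by blast
  interpret S C f x p using assms p by unfold_locales auto
  show ?thesis using final .
qed


end
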